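(* For every $x\in\{0,1\}^{nd/2}$, \[ \lvert \phi^{-1}(x) \rvert \leq (dn)^{dn/2} \cdot \left(\frac{d^2}{n}\right)^{\lvert x\rvert},\] where $\lvert x\rvert=\sum_{j=1}^{nd/2}x(j)$.
   Context: Fix $0<c<1$, $n,d$ with $dn$ even, and $T_{\max}=\binom d2\frac n3$. Let $\mathcal{G}^*_{d,c}(n)$ be the set of $d$-regular graphs on the labeled nodes $\{1,\dots,n\}$ with at least $c\cdot T_{\max}$ triangles, in which additionally at each node the $d$ incident edges are assigned distinct labels $1,\dots,d$ (so each edge carries two labels, one from each endpoint). For $G^*\in\mathcal{G}^*_{d,c}(n)$ define the configuration ordering on its edges: for edges $e=(i_1j_1)$, $f=(i_2j_2)$ with $i_1<j_1$, $i_2<j_2$, set $e\prec f$ if $i_1<i_2$, or if $i_1=i_2$ and the label of $e$ at their common node $i_1$ is smaller than that of $f$. Let $e_1\prec\dots\prec e_{nd/2}$ be the edges in this order and $G^*[k]$ the subgraph with edges $e_1,\dots,e_k$. Define $\phi:\mathcal{G}^*_{d,c}(n)\to\{0,1\}^{nd/2}$ by $\phi(G^* )(k)=1$ if $e_k$ lies in a triangle of $G^*[k]$, and $0$ otherwise. *)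

theory Defs
  imports Complex_Main
begin

text \<open>A labelled graph G* on nodes 1..n is a pair (E, lab): E is a set of 2-element
edge sets, and lab i j is the label (in 1..d) of edge {i,j} at its endpoint i.
For non-edges we canonically put lab i j = 0, so that (E, lab) encodes G* uniquely.\<close>

type_synonym lgraph = "nat set set \<times> (nat \<Rightarrow> nat \<Rightarrow> nat)"

definition triangles :: "nat set set \<Rightarrow> nat set set" where
  "triangles E = {T. \<exists>a b c. T = {a, b, c} \<and> a \<noteq> b \<and> b \<noteq> c \<and> a \<noteq> c
                        \<and> {a, b} \<in> E \<and> {b, c} \<in> E \<and> {a, c} \<in> E}"

definition Tmax :: "nat \<Rightarrow> nat \<Rightarrow> real" where
  "Tmax n d = real (d choose 2) * real n / 3"

definition Gstar :: "nat \<Rightarrow> nat \<Rightarrow> real \<Rightarrow> lgraph set" where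
  "Gstar d n c = {(E, lab).
      E \<subseteq> {{i, j} | i j. i \<in> {1..n} \<and> j \<in> {1..n} \<and> i \<noteq> j}
    \<and> (\<forall>i\<in>{1..n}. card {e \<in> E. i \<in> e} = d)
    \<and> (\<forall>i\<in>{1..n}. bij_betw (lab i) {j. {i, j} \<in> E} {1..d})
    \<and> (\<forall>i j. {i, j} \<notin> E \<longrightarrow> lab i j = 0)
    \<and> real (card (triangles E)) \<ge> c * Tmax n d}"

definition cprec :: "(nat \<Rightarrow> nat \<Rightarrow> nat) \<Rightarrow> nat set \<Rightarrow> nat set \<Rightarrow> bool" where
  "cprec lab e f \<longleftrightarrow> Min e < Min f \<or>
     (Min e = Min f \<and> lab (Min e) (Max e) < lab (Min f) (Max f))"

text \<open>0-based position of an edge in the configuration order.\<close>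
definition crank :: "lgraph \<Rightarrow> nat set \<Rightarrow> nat" where
  "crank G e = card {f \<in> fst G. cprec (snd G) f e}"

text \<open>e_k (1-based) and the subgraph G*[k] with edges e_1..e_k.\<close>
definition cedge :: "lgraph \<Rightarrow> nat \<Rightarrow> nat set" where
  "cedge G k = (THE e. e \<in> fst G \<and> crank G e = k - 1)"

definition prefix_graph :: "lgraph \<Rightarrow> nat \<Rightarrow> nat set set" where
  "prefix_graph G k = {e \<in> fst G. crank G e < k}"

definition in_triangle :: "nat set set \<Rightarrow> nat set \<Rightarrow> bool" where
  "in_triangle E e \<longleftrightarrow> (\<exists>T \<in> triangles E. e \<subseteq> T)"

definition phi :: "nat \<Rightarrow> nat \<Rightarrow> lgraph \<Rightarrow> nat list" where
  "phi n d G = map (\<lambda>k. if in_triangle (prefix_graph G k) (cedge G k) then 1 else 0)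
                   [1..<n * d div 2 + 1]"

end

theory Submission
  imports Defs
begin


lemma count_lists:
  assumes len: "\<forall>l\<in>S. length l = N"
  and ext: "\<And>k p. k < N \<Longrightarrow> finite {l ! k | l. l \<in> S \<and> take k l = p}
               \<and> card {l ! k | l. l \<in> S \<and> take k l = p} \<le> b k"
  shows "card S \<le> (\<Prod>k<N. b k)"
proof -
  have main: "k \<le> N \<Longrightarrow> finite (take k ` S) \<and> card (take k ` S) \<le> (\<Prod>i<k. b i)" for k
  proof (induction k)
    case 0
    have "take 0 ` S \<subseteq> {[]}" by auto
    then show ?case by (simp add: card_mono finite_subset subset_singletonD) (metis card.empty card.insert card_mono finite.emptyI finite.insertI finite_subset empty_iff le_refl)
  next
    case (Suc k)
    define X where "X p = {l ! k | l. l \<in> S \<and> take k l = p}" for p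
    have IH: "finite (take k ` S)" "card (take k ` S) \<le> (\<Prod>i<k. b i)" using Suc by auto
    have fx: "\<And>p. finite (X p)" "\<And>p. card (X p) \<le> b k" using ext[of k] Suc.prems unfolding X_def by auto
    have sub: "take (Suc k) ` S \<subseteq> (\<lambda>(p,a). p @ [a]) ` (SIGMA p:take k ` S. X p)"
    proof
      fix t assume "t \<in> take (Suc k) ` S"
      then obtain l where l: "l \<in> S" "t = take (Suc k) l" by auto
      have "k < length l" using len l Suc.prems by auto
      then have "t = take k l @ [l ! k]" using l by (simp add: take_Suc_conv_app_nth)
      moreover have "l ! k \<in> X (take k l)" unfolding X_def using l by auto
      moreover have "(take k l, l ! k) \<in> (SIGMA p:take k ` S. X p)" using l calculation by auto
      ultimately show "t \<in> (\<lambda>(p,a). p @ [a]) ` (SIGMA p:take k ` S. X p)"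
        by (intro image_eqI[where x="(take k l, l ! k)"]) auto
    qed
    have fS: "finite (SIGMA p:take k ` S. X p)" using IH fx by auto
    have "card (take (Suc k) ` S) \<le> card (SIGMA p:take k ` S. X p)"
      using sub fS by (meson card_image_le card_mono finite_imageI le_trans)
    also have "\<dots> = (\<Sum>p\<in>take k ` S. card (X p))" using IH fx by (simp add: card_SigmaI)
    also have "\<dots> \<le> (\<Sum>p\<in>take k ` S. b k)" by (rule sum_mono) (use fx in auto)
    also have "\<dots> = card (take k ` S) * b k" by simp
    also have "\<dots> \<le> (\<Prod>i<k. b i) * b k" using IH by simp
    also have "\<dots> = (\<Prod>i<Suc k. b i)" by (simp add: mult.commute)
    finally show ?case using sub fS by (meson finite_imageI finite_subset)
  qed
  have "take N ` S = S" using len by (force simp: image_iff)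
  then show ?thesis using main[of N] by simp
qed



lemma gs_props:
  assumes "(E, lab) \<in> Gstar d n c"
  shows gs_edges: "\<And>e. e \<in> E \<Longrightarrow> \<exists>i j. e = {i,j} \<and> i\<in>{1..n} \<and> j\<in>{1..n} \<and> i\<noteq>j"
    and gs_deg: "\<And>i. i\<in>{1..n} \<Longrightarrow> card {e\<in>E. i\<in>e} = d"
    and gs_bij: "\<And>i. i\<in>{1..n} \<Longrightarrow> bij_betw (lab i) {j. {i,j}\<in>E} {1..d}"
    and gs_zero: "\<And>i j. {i,j} \<notin> E \<Longrightarrow> lab i j = 0"
  using assms unfolding Gstar_def by blast+

lemma gs_fin: assumes "(E, lab) \<in> Gstar d n c" shows "finite E"
proof -
  have "E \<subseteq> Pow {1..n}"
  proof
    fix e assume "e \<in> E"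
    then obtain i j where "e = {i,j}" "i\<in>{1..n}" "j\<in>{1..n}" using gs_edges[OF assms] by blast
    then show "e \<in> Pow {1..n}" by blast
  qed
  then show ?thesis by (meson finite_Pow_iff finite_atLeastAtMost finite_subset)
qed

lemma gs_minmax:
  assumes "(E, lab) \<in> Gstar d n c" "e \<in> E"
  shows "e = {Min e, Max e}" "Min e < Max e" "Min e \<in> {1..n}" "Max e \<in> {1..n}"
proof -
  obtain i j where ij: "e = {i,j}" "i\<in>{1..n}" "j\<in>{1..n}" "i\<noteq>j" using gs_edges[OF assms] by blast
  show "e = {Min e, Max e}" "Min e < Max e" "Min e \<in> {1..n}" "Max e \<in> {1..n}"
    using ij by (auto simp: min_def max_def)
qed

lemma gs_nbr:
  assumes "(E, lab) \<in> Gstar d n c"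
  shows "finite {w. {v,w} \<in> E}" "card {w. {v,w} \<in> E} \<le> d"
proof -
  have "finite {w. {v,w} \<in> E} \<and> card {w. {v,w} \<in> E} \<le> d"
  proof (cases "v \<in> {1..n}")
    case True
    then show ?thesis using gs_bij[OF assms True] bij_betw_same_card bij_betw_finite by fastforce
  next
    case False
    have "v \<in> {1..n}" if w: "{v,w} \<in> E" for w
    proof -
      obtain i j where "{v,w} = {i,j}" "i\<in>{1..n}" "j\<in>{1..n}" using gs_edges[OF assms w] by blast
      then have "v \<in> {i,j}" by blast
      then show ?thesis using \<open>i\<in>{1..n}\<close> \<open>j\<in>{1..n}\<close> by blast
    qed
    then have "{w. {v,w} \<in> E} = {}" using False by blast
    then show ?thesis by simp
  qed
  then show "finite {w. {v,w} \<in> E}" "card {w. {v,w} \<in> E} \<le> d" by auto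
qed

lemma gs_lab_range:
  assumes "(E, lab) \<in> Gstar d n c" "{i,j} \<in> E" "i \<in> {1..n}"
  shows "lab i j \<in> {1..d}"
  using gs_bij[OF assms(1,3)] assms(2) by (auto simp: bij_betw_def)

lemma gs_lab_inj:
  assumes "(E, lab) \<in> Gstar d n c" "{i,j} \<in> E" "{i,j'} \<in> E" "i \<in> {1..n}" "lab i j = lab i j'"
  shows "j = j'"
  using gs_bij[OF assms(1,4)] assms(2,3,5) by (auto simp: bij_betw_def inj_on_def)

lemma cprec_trans: "cprec lab e f \<Longrightarrow> cprec lab f g \<Longrightarrow> cprec lab e g"
  unfolding cprec_def by auto

lemma cprec_irrefl: "\<not> cprec lab e e"
  unfolding cprec_def by auto

lemma cprec_total:
  assumes G: "(E, lab) \<in> Gstar d n c" and "e \<in> E" "f \<in> E" "e \<noteq> f"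
  shows "cprec lab e f \<or> cprec lab f e"
proof (rule ccontr)
  assume nc: "\<not> (cprec lab e f \<or> cprec lab f e)"
  then have m: "Min e = Min f" and l: "lab (Min e) (Max e) = lab (Min f) (Max f)"
    unfolding cprec_def by auto
  have "{Min e, Max e} \<in> E" "{Min e, Max f} \<in> E" using gs_minmax[OF G] assms m by metis+
  then have "Max e = Max f" using gs_lab_inj[OF G] l m gs_minmax(3)[OF G \<open>e \<in> E\<close>] by metis
  then have "e = f" using m gs_minmax(1)[OF G] assms by metis
  then show False using assms by simp
qed

lemma crank_simp: "crank (E, lab) e = card {f \<in> E. cprec lab f e}"
  unfolding crank_def by simp

lemma crank_mono:
  assumes G: "(E, lab) \<in> Gstar d n c" and "f \<in> E" "cprec lab f e"
  shows "crank (E, lab) f < crank (E, lab) e"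
proof -
  have sub: "{g \<in> E. cprec lab g f} \<subseteq> {g \<in> E. cprec lab g e}"
    using assms(3) cprec_trans[of lab _ f e] by auto
  have "f \<in> {g \<in> E. cprec lab g e}" "f \<notin> {g \<in> E. cprec lab g f}"
    using assms cprec_irrefl[of lab f] by auto
  then have "{g \<in> E. cprec lab g f} \<subset> {g \<in> E. cprec lab g e}" using sub by blast
  moreover have "finite {g \<in> E. cprec lab g e}" using gs_fin[OF G] by simp
  ultimately show ?thesis unfolding crank_simp by (simp add: psubset_card_mono)
qed

lemma crank_lt_iff:
  assumes G: "(E, lab) \<in> Gstar d n c" and "f \<in> E" "e \<in> E"
  shows "crank (E, lab) f < crank (E, lab) e \<longleftrightarrow> cprec lab f e"
proof
  assume lt: "crank (E, lab) f < crank (E, lab) e"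
  show "cprec lab f e"
  proof (rule ccontr)
    assume nc: "\<not> cprec lab f e"
    have "f \<noteq> e" using lt by auto
    then have "cprec lab e f" using cprec_total[OF G assms(2,3)] nc by blast
    then have "crank (E, lab) e < crank (E, lab) f" using crank_mono[OF G assms(3)] by blast
    then show False using lt by simp
  qed
next
  assume "cprec lab f e"
  then show "crank (E, lab) f < crank (E, lab) e" using crank_mono[OF G assms(2)] by blast
qed

lemma crank_less_card:
  assumes G: "(E, lab) \<in> Gstar d n c" and "e \<in> E"
  shows "crank (E, lab) e < card E"
proof -
  have "{f \<in> E. cprec lab f e} \<subset> E" using assms cprec_irrefl[of lab e] by auto
  then show ?thesis unfolding crank_simp using gs_fin[OF G] by (simp add: psubset_card_mono)
qed

lemma crank_bij:
  assumes G: "(E, lab) \<in> Gstar d n c"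
  shows "bij_betw (crank (E, lab)) E {0..<card E}"
proof -
  have inj: "inj_on (crank (E, lab)) E"
  proof (rule inj_onI, rule ccontr)
    fix e f assume ef: "e \<in> E" "f \<in> E" "crank (E, lab) e = crank (E, lab) f" "e \<noteq> f"
    then have "cprec lab e f \<or> cprec lab f e" using cprec_total[OF G] by blast
    then show False using crank_mono[OF G] ef by (metis less_irrefl)
  qed
  have sub: "crank (E, lab) ` E \<subseteq> {0..<card E}" using crank_less_card[OF G] by auto
  have "card (crank (E, lab) ` E) = card {0..<card E}" using card_image[OF inj] by simp
  then have "crank (E, lab) ` E = {0..<card E}" using sub by (simp add: card_subset_eq)
  then show ?thesis using inj by (simp add: bij_betw_def)
qed

lemma cedge_crank:
  assumes G: "(E, lab) \<in> Gstar d n c" and "e \<in> E"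
  shows "cedge (E, lab) (crank (E, lab) e + 1) = e"
proof -
  have inj: "inj_on (crank (E, lab)) E" using crank_bij[OF G] bij_betw_def by blast
  show ?thesis unfolding cedge_def
    by (rule the_equality) (use assms inj in \<open>auto simp: inj_on_def\<close>)
qed

lemma cedge_props:
  assumes G: "(E, lab) \<in> Gstar d n c" and "k < card E"
  shows "cedge (E, lab) (k + 1) \<in> E" "crank (E, lab) (cedge (E, lab) (k + 1)) = k"
proof -
  obtain e where "e \<in> E" "crank (E, lab) e = k" using crank_bij[OF G] assms(2)
    by (metis atLeastLessThan_iff bij_betw_iff_bijections zero_le)
  then show "cedge (E, lab) (k + 1) \<in> E" "crank (E, lab) (cedge (E, lab) (k + 1)) = k"
    using cedge_crank[OF G] by metis+
qed



definition qd :: "(nat \<Rightarrow> nat \<Rightarrow> nat) \<Rightarrow> nat set \<Rightarrow> nat \<times> nat \<times> nat \<times> nat" where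
  "qd lab e = (Min e, lab (Min e) (Max e), Max e, lab (Max e) (Min e))"

definition enc :: "nat \<Rightarrow> lgraph \<Rightarrow> (nat \<times> nat \<times> nat \<times> nat) list" where
  "enc m G = map (\<lambda>k. qd (snd G) (cedge G k)) [1..<m+1]"

lemma handshake:
  assumes G: "(E, lab) \<in> Gstar d n c"
  shows "2 * card E = n * d"
proof -
  have fE: "finite E" using gs_fin[OF G] .
  have "(\<Sum>i\<in>{1..n}. card {e\<in>E. i\<in>e}) = (\<Sum>i\<in>{1..n}. d)"
    using gs_deg[OF G] by (rule sum.cong[OF refl])
  then have A: "(\<Sum>i\<in>{1..n}. card {e\<in>E. i\<in>e}) = n * d" by simp
  have B: "card {e\<in>E. i\<in>e} = (\<Sum>e\<in>E. if i\<in>e then 1 else 0)" for i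
  proof -
    have "card {e\<in>E. i\<in>e} = (\<Sum>e\<in>{e\<in>E. i\<in>e}. 1)" by simp
    also have "\<dots> = (\<Sum>e\<in>E. if i\<in>e then 1 else 0)" using fE by (rule sum.inter_filter)
    finally show ?thesis .
  qed
  have C: "(\<Sum>i\<in>{1..n}. (if i\<in>e then 1 else 0)) = (2::nat)" if e: "e \<in> E" for e
  proof -
    have "e \<subseteq> {1..n}" by (subst gs_minmax(1)[OF G e]) (use gs_minmax(3,4)[OF G e] in auto)
    then have ee: "{i\<in>{1..n}. i \<in> e} = e" by blast
    have "(\<Sum>i\<in>{1..n}. (if i\<in>e then 1 else 0)) = (\<Sum>i\<in>{i\<in>{1..n}. i \<in> e}. (1::nat))"
      by (rule sum.inter_filter[symmetric]) simp
    also have "\<dots> = card e" using ee by simp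
    also have "card e = 2" using gs_minmax[OF G e] by (metis card_2_iff less_irrefl)
    finally show ?thesis .
  qed
  have "n * d = (\<Sum>i\<in>{1..n}. \<Sum>e\<in>E. if i\<in>e then 1 else 0)" using A B by simp
  also have "\<dots> = (\<Sum>e\<in>E. \<Sum>i\<in>{1..n}. if i\<in>e then 1 else 0)" by (rule sum.swap)
  also have "\<dots> = (\<Sum>e\<in>E. 2)" using C by (rule sum.cong[OF refl])
  finally show ?thesis by simp
qed

lemma cedge_image:
  assumes G: "(E, lab) \<in> Gstar d n c" and k: "k \<le> card E"
  shows "cedge (E, lab) ` {1..<k+1} = {f\<in>E. crank (E, lab) f < k}"
proof
  show "cedge (E, lab) ` {1..<k+1} \<subseteq> {f\<in>E. crank (E, lab) f < k}"
  proof
    fix f assume "f \<in> cedge (E, lab) ` {1..<k+1}"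
    then obtain j where j: "j \<in> {1..<k+1}" "f = cedge (E, lab) j" by auto
    then have "j = (j - 1) + 1" "j - 1 < card E" "j - 1 < k" using k by auto
    then show "f \<in> {f\<in>E. crank (E, lab) f < k}" using cedge_props[OF G, of "j - 1"] j by auto
  qed
next
  show "{f\<in>E. crank (E, lab) f < k} \<subseteq> cedge (E, lab) ` {1..<k+1}"
  proof
    fix f assume f: "f \<in> {f\<in>E. crank (E, lab) f < k}"
    then have "f = cedge (E, lab) (crank (E, lab) f + 1)" using cedge_crank[OF G] by auto
    moreover have "crank (E, lab) f + 1 \<in> {1..<k+1}" using f by auto
    ultimately show "f \<in> cedge (E, lab) ` {1..<k+1}" by blast
  qed
qed

lemma set_take_enc:
  assumes G: "(E, lab) \<in> Gstar d n c" and k: "k \<le> card E"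
  shows "set (take k (enc (card E) (E, lab))) = qd lab ` {f\<in>E. crank (E, lab) f < k}"
proof -
  have "take k [1..<card E + 1] = [1..<1+k]" by (rule take_upt) (use k in simp)
  then have "take k [1..<card E + 1] = [1..<k+1]" by (simp add: add.commute)
  moreover have "set (take k (enc (card E) (E, lab))) = set (map (\<lambda>j. qd lab (cedge (E, lab) j)) (take k [1..<card E+1]))"
    unfolding enc_def by (simp add: take_map del: upt_Suc)
  ultimately have "set (take k (enc (card E) (E, lab))) = (\<lambda>j. qd lab (cedge (E, lab) j)) ` {1..<k+1}"
    by (simp del: upt_Suc)
  also have "\<dots> = qd lab ` (cedge (E, lab) ` {1..<k+1})" by (simp add: image_image)
  finally show ?thesis using cedge_image[OF G k] by simp
qed

lemma set_enc:
  assumes G: "(E, lab) \<in> Gstar d n c"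
  shows "set (enc (card E) (E, lab)) = qd lab ` E"
proof -
  have "set (enc (card E) (E, lab)) = set (take (card E) (enc (card E) (E, lab)))"
    by (simp add: enc_def)
  also have "\<dots> = qd lab ` {f\<in>E. crank (E, lab) f < card E}" using set_take_enc[OF G] by simp
  also have "{f\<in>E. crank (E, lab) f < card E} = E" using crank_less_card[OF G] by auto
  finally show ?thesis .
qed

lemma length_enc: "length (enc m G) = m" by (simp add: enc_def)

lemma nth_enc: "k < m \<Longrightarrow> enc m G ! k = qd (snd G) (cedge G (k+1))"
  by (simp add: enc_def del: upt_Suc)

lemma nth_phi: "k < n * d div 2 \<Longrightarrow>
   phi n d G ! k = (if in_triangle (prefix_graph G (k+1)) (cedge G (k+1)) then 1 else 0)"
  by (simp add: phi_def del: upt_Suc)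

lemma qd_inj_sets:
  assumes G: "(E, lab) \<in> Gstar d n c" and G': "(E', lab') \<in> Gstar d n c"
    and eq: "qd lab ` E = qd lab' ` E'"
  shows "(E, lab) = (E', lab')"
proof -
  have match: "\<exists>e'\<in>E'. e' = e \<and> qd lab e = qd lab' e'" if e: "e \<in> E" for e
  proof -
    obtain e' where e': "e' \<in> E'" "qd lab e = qd lab' e'" using eq e by (metis imageE imageI)
    then have "Min e = Min e'" "Max e = Max e'" unfolding qd_def by auto
    then have "e = e'" using gs_minmax(1)[OF G e] gs_minmax(1)[OF G' e'(1)] by metis
    then show ?thesis using e' by blast
  qed
  have match': "\<exists>e\<in>E. e = e'" if e': "e' \<in> E'" for e'
  proof -
    obtain e where e: "e \<in> E" "qd lab e = qd lab' e'" using eq e' by (metis imageE imageI)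
    then have "Min e = Min e'" "Max e = Max e'" unfolding qd_def by auto
    then have "e = e'" using gs_minmax(1)[OF G e(1)] gs_minmax(1)[OF G' e'] by metis
    then show ?thesis using e by blast
  qed
  have EE: "E = E'" using match match' by blast
  have "lab i j = lab' i j" for i j
  proof (cases "{i,j} \<in> E")
    case True
    define e where "e = {i,j}"
    have e: "e \<in> E" using True e_def by simp
    have q: "qd lab e = qd lab' e" using match[OF e] by auto
    have "e = {Min e, Max e}" "Min e < Max e" using gs_minmax[OF G e] by auto
    then have "(i = Min e \<and> j = Max e) \<or> (i = Max e \<and> j = Min e)" unfolding e_def
      by (metis doubleton_eq_iff)
    then show ?thesis using q unfolding qd_def by auto
  next
    case False
    then show ?thesis using gs_zero[OF G] gs_zero[OF G'] EE by metis
  qed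
  then show ?thesis using EE by auto
qed



definition pts :: "(nat \<times> nat \<times> nat \<times> nat) list \<Rightarrow> (nat \<times> nat) set" where
  "pts P = (\<lambda>(a,la,c,lc). (a,la)) ` set P \<union> (\<lambda>(a,la,c,lc). (c,lc)) ` set P"

definition EP :: "(nat \<times> nat \<times> nat \<times> nat) list \<Rightarrow> nat set set" where
  "EP P = (\<lambda>(a,la,c,lc). {a,c}) ` set P"

definition NN :: "(nat \<times> nat \<times> nat \<times> nat) list \<Rightarrow> nat \<Rightarrow> nat set" where
  "NN P i = {c. \<exists>b. {i,b} \<in> EP P \<and> {b,c} \<in> EP P}"

definition good :: "(nat \<times> nat \<times> nat \<times> nat) list \<Rightarrow> nat \<Rightarrow> nat \<Rightarrow> nat \<Rightarrow> nat \<Rightarrow> bool" where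
  "good P n d v l \<longleftrightarrow> v\<in>{1..n} \<and> l\<in>{1..d} \<and> (v,l) \<notin> pts P \<and>
     (\<forall>v' l'. v'\<in>{1..n} \<longrightarrow> l'\<in>{1..d} \<longrightarrow> (v' < v \<or> v' = v \<and> l' < l) \<longrightarrow> (v',l') \<in> pts P)"

lemma good_unique: "good P n d v l \<Longrightarrow> good P n d v' l' \<Longrightarrow> v = v' \<and> l = l'"
proof -
  assume g1: "good P n d v l" and g2: "good P n d v' l'"
  have "\<not> (v < v' \<or> v = v' \<and> l < l')" using g1 g2 unfolding good_def by blast
  moreover have "\<not> (v' < v \<or> v' = v \<and> l' < l)" using g1 g2 unfolding good_def by blast
  ultimately show ?thesis by auto
qed

lemma pts_iff:
  assumes "set P = qd lab ` F"
  shows "p \<in> pts P \<longleftrightarrow> (\<exists>f\<in>F. p = (Min f, lab (Min f) (Max f)) \<or> p = (Max f, lab (Max f) (Min f)))"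
proof -
  have "pts P = (\<lambda>f. (Min f, lab (Min f) (Max f))) ` F \<union> (\<lambda>f. (Max f, lab (Max f) (Min f))) ` F"
    unfolding pts_def assms by (simp add: image_image qd_def)
  then show ?thesis by blast
qed

lemma EP_eq:
  assumes G: "(E, lab) \<in> Gstar d n c" and "set P = qd lab ` F" "F \<subseteq> E"
  shows "EP P = F"
proof -
  have "EP P = (\<lambda>f. {Min f, Max f}) ` F" unfolding EP_def assms(2) by (simp add: image_image qd_def)
  also have "\<dots> = (\<lambda>f. f) ` F" using gs_minmax(1)[OF G] assms(3) by (intro image_cong) auto
  also have "\<dots> = F" by simp
  finally show ?thesis .
qed

lemma Min_Max_2: "v < w \<Longrightarrow> Min {v,w} = (v::nat) \<and> Max {v,w} = w"
  by auto

lemma mm_eq: "(E, lab) \<in> Gstar d n c \<Longrightarrow> e \<in> E \<Longrightarrow> {Min e, Max e} = e"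
  using gs_minmax(1) by (rule sym)

lemma next_point:
  assumes G: "(E, lab) \<in> Gstar d n c" and k: "k < card E"
    and e: "e = cedge (E, lab) (k+1)"
    and P: "P = take k (enc (card E) (E, lab))"
  shows "good P n d (Min e) (lab (Min e) (Max e))"
proof -
  define F where "F = {f\<in>E. crank (E, lab) f < k}"
  have sP: "set P = qd lab ` F" unfolding P F_def using set_take_enc[OF G] k by simp
  have eE: "e \<in> E" and ck: "crank (E, lab) e = k" using cedge_props[OF G k] e by auto
  have mme: "{Min e, Max e} = e" using mm_eq[OF G eE] .
  have mlt: "Min e < Max e" and r1: "Min e \<in> {1..n}" using gs_minmax[OF G eE] by auto
  have eE2: "{Min e, Max e} \<in> E" using mme eE by simp
  have r2: "lab (Min e) (Max e) \<in> {1..d}" using gs_lab_range[OF G eE2 r1] .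
  have notin: "(Min e, lab (Min e) (Max e)) \<notin> pts P"
  proof
    assume "(Min e, lab (Min e) (Max e)) \<in> pts P"
    then obtain f where f: "f \<in> F" and
      or: "(Min e, lab (Min e) (Max e)) = (Min f, lab (Min f) (Max f)) \<or>
           (Min e, lab (Min e) (Max e)) = (Max f, lab (Max f) (Min f))"
      using pts_iff[OF sP] by blast
    have fE: "f \<in> E" and fk: "crank (E, lab) f < k" using f F_def by auto
    have mmf: "{Min f, Max f} = f" using mm_eq[OF G fE] .
    have flt: "Min f < Max f" using gs_minmax(2)[OF G fE] .
    show False
    proof (cases "(Min e, lab (Min e) (Max e)) = (Min f, lab (Min f) (Max f))")
      case True
      then have h1: "Min e = Min f" and h2: "lab (Min e) (Max e) = lab (Min e) (Max f)" by auto
      have "{Min e, Max f} \<in> E" using h1 mmf fE by simp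
      then have h3: "Max e = Max f" using gs_lab_inj[OF G eE2 _ r1 h2] by blast
      have "{Min e, Max e} = {Min f, Max f}" using h1 h3 by simp
      then have "e = f" using mme mmf by simp
      then show False using fk ck by simp
    next
      case False
      then have h: "Min e = Max f" "lab (Min e) (Max e) = lab (Min e) (Min f)" using or by auto
      have "{Min e, Min f} \<in> E" using h(1) mmf fE by (simp add: insert_commute)
      then have "Max e = Min f" using gs_lab_inj[OF G eE2 _ r1 h(2)] by blast
      then show False using h(1) mlt flt by linarith
    qed
  qed
  have smaller: "(v, l) \<in> pts P" if v: "v\<in>{1..n}" and l: "l\<in>{1..d}"
    and lt: "v < Min e \<or> v = Min e \<and> l < lab (Min e) (Max e)" for v l
  proof -
    have "l \<in> lab v ` {j. {v,j}\<in>E}" using gs_bij[OF G v] l unfolding bij_betw_def by auto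
    then obtain w where w: "{v,w} \<in> E" "lab v w = l" by auto
    define f where "f = {v,w}"
    have fE: "f \<in> E" using w f_def by simp
    have flt: "Min f < Max f" using gs_minmax(2)[OF G fE] .
    have vw: "v \<noteq> w"
    proof
      assume "v = w"
      then have "f = {v}" using f_def by simp
      then show False using flt by simp
    qed
    show ?thesis
    proof (cases "v < w")
      case True
      then have mm2: "Min f = v" "Max f = w" using f_def by auto
      have "cprec lab f e" unfolding cprec_def using mm2 lt w by auto
      then have "crank (E, lab) f < k" using crank_mono[OF G fE] ck by auto
      then have "f \<in> F" using fE F_def by simp
      then show ?thesis using pts_iff[OF sP] mm2 w by auto
    next
      case False
      then have wv: "w < v" using vw by simp
      then have mm2: "Min f = w" "Max f = v" using f_def by auto
      have "cprec lab f e" unfolding cprec_def using mm2 lt wv by auto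
      then have "crank (E, lab) f < k" using crank_mono[OF G fE] ck by auto
      then have "f \<in> F" using fE F_def by simp
      moreover have "lab v w = lab (Max f) (Min f)" using mm2 by simp
      ultimately show ?thesis using pts_iff[OF sP] mm2 w by auto
    qed
  qed
  show ?thesis unfolding good_def using r1 r2 notin smaller by blast
qed

lemma tri_pick:
  assumes "a\<noteq>b" "b\<noteq>c" "a\<noteq>c" "{a,b}\<in>X" "{b,c}\<in>X" "{a,c}\<in>X" "i\<in>{a,b,c}" "j\<in>{a,b,c}" "i\<noteq>j"
  shows "\<exists>w. w\<noteq>i \<and> w\<noteq>j \<and> {i,w}\<in>X \<and> {w,j}\<in>X"
  using assms by (auto simp: insert_commute)

lemma tri_step:
  assumes G: "(E, lab) \<in> Gstar d n c" and k: "k < card E"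
    and e: "e = cedge (E, lab) (k+1)"
    and P: "P = take k (enc (card E) (E, lab))"
    and tri: "in_triangle (prefix_graph (E, lab) (k+1)) e"
  shows "Max e \<in> NN P (Min e)"
proof -
  define F where "F = {f\<in>E. crank (E, lab) f < k}"
  have sP: "set P = qd lab ` F" unfolding P F_def using set_take_enc[OF G] k by simp
  have EPF: "EP P = F" using EP_eq[OF G sP] F_def by auto
  have eE: "e \<in> E" and ck: "crank (E, lab) e = k" using cedge_props[OF G k] e by auto
  have mme: "{Min e, Max e} = e" using mm_eq[OF G eE] .
  have mlt: "Min e < Max e" using gs_minmax(2)[OF G eE] .
  have "Min e \<in> {Min e, Max e}" "Max e \<in> {Min e, Max e}" by simp_all
  then have ine: "Min e \<in> e" "Max e \<in> e" using mme by simp_all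
  define X where "X = prefix_graph (E, lab) (k+1)"
  have X: "X = {f\<in>E. crank (E, lab) f < k+1}" unfolding X_def prefix_graph_def by simp
  obtain T where T: "T \<in> triangles X" "e \<subseteq> T" using tri X_def unfolding in_triangle_def by blast
  then obtain a b c' where abc: "T = {a,b,c'}" "a\<noteq>b" "b\<noteq>c'" "a\<noteq>c'" "{a,b}\<in>X" "{b,c'}\<in>X" "{a,c'}\<in>X"
    unfolding triangles_def by blast
  have ij: "Min e \<in> {a,b,c'}" "Max e \<in> {a,b,c'}" "Min e \<noteq> Max e" using T(2) abc(1) ine mlt by auto
  obtain w where w: "w \<noteq> Min e" "w \<noteq> Max e" "{Min e, w} \<in> X" "{w, Max e} \<in> X"
    using tri_pick[OF abc(2-7) ij] by blast
  have inF: "f \<in> F" if fX: "f \<in> X" and fw: "w \<in> f" for f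
  proof -
    have fE: "f \<in> E" and fk: "crank (E, lab) f < k+1" using fX X by auto
    have "w \<notin> e"
    proof
      assume "w \<in> e"
      then have "w \<in> {Min e, Max e}" using mme by simp
      then show False using w(1,2) by simp
    qed
    then have "f \<noteq> e" using fw by blast
    then have "crank (E, lab) f \<noteq> k" using cedge_crank[OF G fE] e by metis
    then show ?thesis using fE fk F_def by simp
  qed
  have "{Min e, w} \<in> EP P" "{w, Max e} \<in> EP P" using inF w EPF by auto
  then show ?thesis unfolding NN_def by blast
qed

lemma NN_card:
  assumes G: "(E, lab) \<in> Gstar d n c" and sub: "EP P \<subseteq> E"
  shows "finite (NN P i) \<and> card (NN P i) \<le> d * d"
proof -
  define N where "N v = {w. {v,w} \<in> E}" for v
  have fN: "finite (N v)" "card (N v) \<le> d" for v using gs_nbr[OF G] N_def by auto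
  have "NN P i \<subseteq> (\<Union>b\<in>N i. N b)" using sub unfolding NN_def N_def by blast
  moreover have "finite (\<Union>b\<in>N i. N b)" using fN by blast
  moreover have "card (\<Union>b\<in>N i. N b) \<le> d * d"
  proof -
    have "card (\<Union>b\<in>N i. N b) \<le> (\<Sum>b\<in>N i. card (N b))" using fN by (simp add: card_UN_le)
    also have "\<dots> \<le> (\<Sum>b\<in>N i. d)" by (rule sum_mono) (use fN in auto)
    also have "\<dots> = card (N i) * d" by simp
    also have "\<dots> \<le> d * d" using fN by simp
    finally show ?thesis .
  qed
  ultimately show ?thesis by (meson card_mono finite_subset le_trans)
qed



theorem lemma1:
  fixes n d :: nat and c :: real and x :: "nat list"
  assumes "0 < c" and "c < 1" and "even (d * n)"
    and "length x = n * d div 2" and "set x \<subseteq> {0, 1}"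
  shows "real (card {G \<in> Gstar d n c. phi n d G = x})
           \<le> real (d * n) ^ (d * n div 2) * (real d ^ 2 / real n) ^ (sum_list x)"
proof -
  define m where "m = n * d div 2"
  define A where "A = {G \<in> Gstar d n c. phi n d G = x}"
  define b where "b k = (if x ! k = 1 then d^3 else n * d)" for k
  have cardE: "card E = m" if "(E, lab) \<in> Gstar d n c" for E lab
  proof -
    have "2 * card E = n * d" using handshake[OF that] .
    then have "card E = (n * d) div 2" by linarith
    then show ?thesis using m_def by simp
  qed
  have inj: "inj_on (enc m) A"
  proof (rule inj_onI)
    fix G G' assume GA: "G \<in> A" and G'A: "G' \<in> A" and eq: "enc m G = enc m G'"
    obtain E lab where GE: "G = (E, lab)" by (cases G)
    obtain E' lab' where GE': "G' = (E', lab')" by (cases G')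
    have G: "(E, lab) \<in> Gstar d n c" and G': "(E', lab') \<in> Gstar d n c" using GA G'A GE GE' A_def by auto
    have "qd lab ` E = set (enc m (E, lab))" using set_enc[OF G] cardE[OF G] by simp
    also have "\<dots> = set (enc m (E', lab'))" using eq GE GE' by simp
    also have "\<dots> = qd lab' ` E'" using set_enc[OF G'] cardE[OF G'] by simp
    finally show "G = G'" using qd_inj_sets[OF G G'] GE GE' by simp
  qed
  have len: "\<forall>l\<in>enc m ` A. length l = m" by (auto simp: length_enc)
  have ext: "finite {l ! k | l. l \<in> enc m ` A \<and> take k l = p}
           \<and> card {l ! k | l. l \<in> enc m ` A \<and> take k l = p} \<le> b k" if k: "k < m" for k p
  proof (cases "{l ! k | l. l \<in> enc m ` A \<and> take k l = p} = {}")
    case True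
    show ?thesis unfolding True by simp
  next
    case False
    define X where "X = {l ! k | l. l \<in> enc m ` A \<and> take k l = p}"
    obtain G0 where G0A: "G0 \<in> A" and p0: "take k (enc m G0) = p" using False by auto
    obtain E0 lab0 where GE0: "G0 = (E0, lab0)" by (cases G0)
    have G0: "(E0, lab0) \<in> Gstar d n c" using G0A GE0 A_def by auto
    have c0: "card E0 = m" using cardE[OF G0] .
    define e0 where "e0 = cedge (E0, lab0) (k+1)"
    define i0 where "i0 = Min e0"
    define l0 where "l0 = lab0 (Min e0) (Max e0)"
    have good0: "good p n d i0 l0"
      using next_point[OF G0 _ e0_def] k c0 p0 GE0 i0_def l0_def by simp
    have sp: "set p = qd lab0 ` {f\<in>E0. crank (E0, lab0) f < k}"
      using set_take_enc[OF G0, of k] k c0 p0 GE0 by simp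
    have EPsub: "EP p \<subseteq> E0" using EP_eq[OF G0 sp] by auto
    define C where "C = (if x ! k = 1 then NN p i0 else {1..n})"
    have fC: "finite C" and cC: "card C * d \<le> b k"
    proof -
      have "finite C \<and> card C \<le> (if x ! k = 1 then d * d else n)"
        using NN_card[OF G0 EPsub, of i0] unfolding C_def by auto
      then show "finite C" "card C * d \<le> b k" unfolding b_def
        by (auto simp: power3_eq_cube mult.commute)
    qed
    have sub: "X \<subseteq> (\<lambda>(j, lj). (i0, l0, j, lj)) ` (C \<times> {1..d})"
    proof
      fix y assume "y \<in> X"
      then obtain G where GA: "G \<in> A" and pG: "take k (enc m G) = p" and y: "y = enc m G ! k"
        unfolding X_def by auto
      obtain E lab where GE: "G = (E, lab)" by (cases G)
      have G: "(E, lab) \<in> Gstar d n c" using GA GE A_def by auto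
      have cE: "card E = m" using cardE[OF G] .
      define e where "e = cedge (E, lab) (k+1)"
      have eE: "e \<in> E" using cedge_props[OF G, of k] k cE e_def by simp
      have ye: "y = qd lab e" using y nth_enc[OF k] GE e_def by simp
      have ge: "good p n d (Min e) (lab (Min e) (Max e))"
        using next_point[OF G _ e_def] k cE pG GE by simp
      have same: "Min e = i0" "lab (Min e) (Max e) = l0" using good_unique[OF ge good0] by auto
      have mme: "{Min e, Max e} = e" using mm_eq[OF G eE] .
      have r: "Max e \<in> {1..n}" using gs_minmax(4)[OF G eE] .
      have "{Max e, Min e} = {Min e, Max e}" by (rule insert_commute)
      then have "{Max e, Min e} \<in> E" using mme eE by simp
      then have rl: "lab (Max e) (Min e) \<in> {1..d}" using gs_lab_range[OF G _ r] by blast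
      have "Max e \<in> C"
      proof (cases "x ! k = 1")
        case True
        have "phi n d G = x" using GA A_def by simp
        then have p1: "phi n d G ! k = 1" using True by simp
        have km: "k < n * d div 2" using k m_def by simp
        have "in_triangle (prefix_graph G (k+1)) (cedge G (k+1))"
        proof (rule ccontr)
          assume "\<not> in_triangle (prefix_graph G (k+1)) (cedge G (k+1))"
          then have "phi n d G ! k = 0" using nth_phi[OF km, of G] by simp
          then show False using p1 by simp
        qed
        then have "in_triangle (prefix_graph (E, lab) (k+1)) e" using GE e_def by simp
        then have "Max e \<in> NN p (Min e)" using tri_step[OF G _ e_def] k cE pG GE by simp
        then show ?thesis using True same C_def by simp
      next
        case False
        then show ?thesis using r C_def by simp
      qed
      moreover have "y = (\<lambda>(j, lj). (i0, l0, j, lj)) (Max e, lab (Max e) (Min e))"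
        using ye same unfolding qd_def by simp
      ultimately show "y \<in> (\<lambda>(j, lj). (i0, l0, j, lj)) ` (C \<times> {1..d})"
        using rl by blast
    qed
    have fin: "finite X" by (rule finite_subset[OF sub finite_imageI[OF finite_cartesian_product[OF fC finite_atLeastAtMost]]])
    have "card X \<le> card ((\<lambda>(j, lj). (i0, l0, j, lj)) ` (C \<times> {1..d}))"
      using sub fC by (intro card_mono) auto
    also have "\<dots> \<le> card (C \<times> {1..d})" by (rule card_image_le) (use fC in auto)
    also have "\<dots> = card C * d" by (simp add: card_cartesian_product)
    also have "\<dots> \<le> b k" using cC .
    finally show ?thesis using fin X_def by simp
  qed
  have "card (enc m ` A) \<le> (\<Prod>k<m. b k)"
    by (rule count_lists[OF len]) (use ext in blast)
  then have "card A \<le> (\<Prod>k<m. b k)" using card_image[OF inj] by simp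
  then have cA: "real (card A) \<le> real (\<Prod>k<m. b k)" by (rule of_nat_mono)
  have lx: "length x = m" using assms(4) m_def by simp
  have mm: "d * n div 2 = m" using m_def by (simp add: mult.commute)
  show ?thesis
  proof (cases "m = 0")
    case True
    then have "x = []" using lx by simp
    then show ?thesis using cA True mm A_def by simp
  next
    case False
    then have "n * d \<noteq> 0" using m_def by (metis div_0)
    then have n0: "n > 0" and d0: "d > 0" by auto
    define q where "q = real d ^ 2 / real n"
    have bk: "real (b k) = real (d * n) * q ^ (x ! k)" if "k < m" for k
    proof -
      have "x ! k \<in> {0, 1}" using assms(5) lx that nth_mem by blast
      then show ?thesis unfolding b_def q_def using n0
        by (auto simp: field_simps power2_eq_square power3_eq_cube)
    qed
    have "real (\<Prod>k<m. b k) = (\<Prod>k<m. real (d * n) * q ^ (x ! k))"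
      using bk by (simp add: of_nat_prod)
    also have "\<dots> = real (d * n) ^ m * (\<Prod>k<m. q ^ (x ! k))" by (simp add: prod.distrib)
    also have "(\<Prod>k<m. q ^ (x ! k)) = q ^ (\<Sum>k<m. x ! k)" by (simp add: power_sum)
    also have "(\<Sum>k<m. x ! k) = sum_list x" using lx by (simp add: sum_list_sum_nth atLeast0LessThan)
    finally show ?thesis using cA mm A_def q_def by simp
  qed
qed

end
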